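(* Let $q$ be a prime power, $m>4$, $F=\mathbb F_q$, $V=\mathbb F_q^m$. Let $E\subset E_1$ be subspaces of $\bigwedge^2V$ with $\dim E_1=\dim E+1$, and assume $E$ is decomposable and $E_1$ is not decomposable. Then: (i) the set $E_1\setminus E$ contains at most $q^2(q-1)$ decomposable vectors; (ii) if $E_1\setminus E$ contains a decomposable vector $\omega$ such that $V_\omega\subseteq V^E$, then $E_1\setminus E$ contains exactly $q^2(q-1)$ decomposable vectors.
   Context: A nonzero $\omega\in\bigwedge^2V$ is decomposable if $\omega=u\wedge v$ for some $u,v\in V$; a subspace is decomposable if all its nonzero elements are decomposable. For $\omega\in\bigwedge^2V$, $V_\omega=\{v\in V: v\wedge\omega=0\}$; for a subspace $E$, $V^E=\sum_{0\ne\omega\in E}V_\omega$. *)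

theory Defs
  imports "HOL-Analysis.Analysis"
begin

text \<open>V = F^m is modelled as the type 'a^'n (CARD('n) = m); the exterior square
  of V is modelled as the space of alternating coordinate arrays 'a^('n::finite \<times> 'n):
  an element w corresponds to sum over i<j of w(i,j) e_i \<and> e_j.\<close>

definition alt2 :: "('a::field ^ ('n::finite \<times> 'n)) set" where
  "alt2 = {w. \<forall>i j. w $ (i, j) = - w $ (j, i) \<and> w $ (i, i) = 0}"

definition wedge :: "'a::field ^ 'n \<Rightarrow> 'a ^ 'n \<Rightarrow> 'a ^ ('n::finite \<times> 'n)" where
  "wedge u v = (\<chi> p. u $ fst p * v $ snd p - u $ snd p * v $ fst p)"

definition decomposable :: "'a::field ^ ('n::finite \<times> 'n) \<Rightarrow> bool" where
  "decomposable w \<longleftrightarrow> w \<noteq> 0 \<and> (\<exists>u v. w = wedge u v)"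

definition decomposable_subspace :: "('a::field ^ ('n::finite \<times> 'n)) set \<Rightarrow> bool" where
  "decomposable_subspace E \<longleftrightarrow> (\<forall>w\<in>E. w \<noteq> 0 \<longrightarrow> decomposable w)"

text \<open>v \<and> w in the third exterior power, as its (alternating) coordinates.\<close>
definition wedge3 :: "'a::field ^ 'n \<Rightarrow> 'a ^ ('n::finite \<times> 'n) \<Rightarrow> 'n \<Rightarrow> 'n \<Rightarrow> 'n \<Rightarrow> 'a" where
  "wedge3 v w i j k = v $ i * w $ (j, k) - v $ j * w $ (i, k) + v $ k * w $ (i, j)"

definition Vw :: "'a::field ^ ('n::finite \<times> 'n) \<Rightarrow> ('a ^ 'n) set" where
  "Vw w = {v. wedge3 v w = (\<lambda>i j k. 0)}"

definition VE :: "('a::field ^ ('n::finite \<times> 'n)) set \<Rightarrow> ('a ^ 'n) set" where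
  "VE E = vec.span (\<Union>w\<in>E - {0}. Vw w)"

end

theory Submission imports Defs begin

lemma wedge_add1: "wedge (a + b) c = wedge a c + wedge b c"
  by (simp add: vec_eq_iff wedge_def algebra_simps)
lemma wedge_add2: "wedge a (b + c) = wedge a b + wedge a c"
  by (simp add: vec_eq_iff wedge_def algebra_simps)
lemma wedge_scale1: "wedge (k *s a) b = k *s wedge a b"
  by (simp add: vec_eq_iff wedge_def algebra_simps)
lemma wedge_scale2: "wedge a (k *s b) = k *s wedge a b"
  by (simp add: vec_eq_iff wedge_def algebra_simps)
lemma wedge_diff1: "wedge (a - b) c = wedge a c - wedge b c"
  by (simp add: vec_eq_iff wedge_def algebra_simps)
lemma wedge_diff2: "wedge a (b - c) = wedge a b - wedge a c"
  by (simp add: vec_eq_iff wedge_def algebra_simps)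
lemma wedge_neg1: "wedge (- a) b = - wedge a b"
  by (simp add: vec_eq_iff wedge_def algebra_simps)
lemma wedge_neg2: "wedge a (- b) = - wedge a b"
  by (simp add: vec_eq_iff wedge_def algebra_simps)
lemma wedge_swap: "wedge a b = - wedge b a"
  by (simp add: vec_eq_iff wedge_def algebra_simps)
lemma wedge_self[simp]: "wedge a a = 0"
  by (simp add: vec_eq_iff wedge_def algebra_simps)
lemma wedge_zero1[simp]: "wedge 0 a = 0" and wedge_zero2[simp]: "wedge a 0 = 0"
  by (simp_all add: vec_eq_iff wedge_def)

lemmas wedge_lin = wedge_add1 wedge_add2 wedge_scale1 wedge_scale2 wedge_diff1 wedge_diff2 wedge_neg1 wedge_neg2

definition ind2 :: "'a::field^'n \<Rightarrow> 'a^'n \<Rightarrow> bool" where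
  "ind2 a b \<longleftrightarrow> (\<forall>x y. x *s a + y *s b = 0 \<longrightarrow> x = 0 \<and> y = 0)"

definition ind3 :: "'a::field^'n \<Rightarrow> 'a^'n \<Rightarrow> 'a^'n \<Rightarrow> bool" where
  "ind3 a b c \<longleftrightarrow> (\<forall>x y z. x *s a + y *s b + z *s c = 0 \<longrightarrow> x = 0 \<and> y = 0 \<and> z = 0)"

definition ind4 :: "'a::field^'n \<Rightarrow> 'a^'n \<Rightarrow> 'a^'n \<Rightarrow> 'a^'n \<Rightarrow> bool" where
  "ind4 a b c d \<longleftrightarrow> (\<forall>x y z w. x *s a + y *s b + z *s c + w *s d = 0 \<longrightarrow> x = 0 \<and> y = 0 \<and> z = 0 \<and> w = 0)"

lemma wedge_ne0_ind2:
  fixes a b :: "'a::field^'n"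
  assumes "wedge a b \<noteq> 0" shows "ind2 a b"
  unfolding ind2_def
proof (intro allI impI)
  fix x y assume h: "x *s a + y *s b = 0"
  show "x = 0 \<and> y = 0"
  proof (rule ccontr)
    assume "\<not> (x = 0 \<and> y = 0)"
    then consider "x \<noteq> 0" | "y \<noteq> 0" by blast
    then show False
    proof cases
      case 1
      have "x *s a = - (y *s b)" using h by (simp add: eq_neg_iff_add_eq_0)
      have "a = (1/x) *s (x *s a)" using 1 by simp
      also have "\<dots> = (- y / x) *s b" using \<open>x *s a = - (y *s b)\<close> by simp
      finally have "a = (- y / x) *s b" .
      then show False using assms by (simp add: wedge_scale1 wedge_neg1)
    next
      case 2
      have "y *s b = - (x *s a)" using h by (simp add: eq_neg_iff_add_eq_0 add.commute)
      have "b = (1/y) *s (y *s b)" using 2 by simp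
      also have "\<dots> = (- x / y) *s a" using \<open>y *s b = - (x *s a)\<close> by simp
      finally have "b = (- x / y) *s a" .
      then show False using assms by (simp add: wedge_scale2 wedge_neg2)
    qed
  qed
qed

lemma wedge_zero_dep:
  fixes a b :: "'a::field^'n"
  assumes "wedge a b = 0" "a \<noteq> 0" shows "\<exists>k. b = k *s a"
proof -
  obtain i where i: "a$i \<noteq> 0" using assms(2) by (auto simp: vec_eq_iff)
  have "\<forall>j. a$i * b$j - a$j * b$i = 0"
    using assms(1) by (auto simp: vec_eq_iff wedge_def dest: spec[of _ "(i, _)"])
  then have "b = (b$i / a$i) *s a" using i
    by (auto simp: vec_eq_iff field_simps)
  then show ?thesis by blast
qed

lemma ind2_wedge:
  fixes a b :: "'a::field^'n"
  assumes "ind2 a b" shows "wedge a b \<noteq> 0"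
proof
  assume w: "wedge a b = 0"
  have "a \<noteq> 0" using assms[unfolded ind2_def, rule_format, of 1 0] by auto
  then obtain k where "b = k *s a" using wedge_zero_dep w by blast
  then have "k *s a + (-1) *s b = 0" by simp
  then show False using assms unfolding ind2_def by fastforce
qed

lemma wedge3_left: "wedge3 x (wedge x y) = (\<lambda>i j k. 0)"
  by (simp add: fun_eq_iff wedge3_def wedge_def algebra_simps)
lemma wedge3_right: "wedge3 y (wedge x y) = (\<lambda>i j k. 0)"
  by (simp add: fun_eq_iff wedge3_def wedge_def algebra_simps)

lemma Vw_wedge:
  fixes a b :: "'a::field^'n"
  assumes "wedge a b \<noteq> 0"
  shows "v \<in> Vw (wedge a b) \<longleftrightarrow> (\<exists>x y. v = x *s a + y *s b)"
proof
  assume "v \<in> Vw (wedge a b)"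
  then have W: "\<And>i j k. wedge3 v (wedge a b) i j k = 0" by (simp add: Vw_def fun_eq_iff)
  obtain p where "wedge a b $ p \<noteq> 0" using assms by (auto simp: vec_eq_iff)
  then obtain j k where m: "a$j*b$k - a$k*b$j \<noteq> 0"
    by (cases p) (auto simp: wedge_def)
  define m where "m = a$j*b$k - a$k*b$j"
  have "v = ((v$j*b$k - v$k*b$j)/m) *s a + ((v$k*a$j - v$j*a$k)/m) *s b"
  proof (subst vec_eq_iff, rule allI)
    fix i
    have "wedge3 v (wedge a b) i j k = 0" by (rule W)
    then have "v$i * m = a$i*(v$j*b$k - v$k*b$j) + b$i*(v$k*a$j - v$j*a$k)"
      by (simp add: wedge3_def wedge_def m_def algebra_simps)
    then have "v$i = (a$i*(v$j*b$k - v$k*b$j) + b$i*(v$k*a$j - v$j*a$k)) / m"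
      using m by (simp add: eq_divide_eq mult.commute m_def[symmetric])
    then show "v$i = (((v$j*b$k - v$k*b$j)/m) *s a + ((v$k*a$j - v$j*a$k)/m) *s b)$i"
      by (simp add: add_divide_distrib mult.commute)
  qed
  then show "\<exists>x y. v = x *s a + y *s b" by blast
next
  assume "\<exists>x y. v = x *s a + y *s b"
  then obtain x y where "v = x *s a + y *s b" by blast
  then show "v \<in> Vw (wedge a b)"
    by (simp add: Vw_def fun_eq_iff wedge3_def wedge_def algebra_simps)
qed

lemma wedge3_scale: "wedge3 v (k *s w) = (\<lambda>i j l. k * wedge3 v w i j l)"
  by (simp add: fun_eq_iff wedge3_def algebra_simps)

lemma Vw_scale: "(k::'a::field) \<noteq> 0 \<Longrightarrow> Vw (k *s w) = Vw w"
  by (auto simp: Vw_def wedge3_scale fun_eq_iff)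

lemma wedge_factor:
  fixes x y :: "'a::field^'n"
  assumes "z = a *s x + b *s y" "z \<noteq> 0"
  shows "\<exists>c d. wedge x y = wedge z (c *s x + d *s y)"
proof (cases "a = 0")
  case False
  have "wedge z (0 *s x + (1/a) *s y) = wedge x y" using False
    by (simp add: assms(1) wedge_lin)
  then show ?thesis by metis
next
  case True
  then have b: "b \<noteq> 0" "z = b *s y" using assms by auto
  have "wedge z ((-1/b) *s x + 0 *s y) = wedge x y" using b
    by (simp add: wedge_lin wedge_swap[of y x])
  then show ?thesis by metis
qed


definition lin :: "('a::field^'n \<Rightarrow> 'a) \<Rightarrow> bool" where
  "lin g \<longleftrightarrow> (\<forall>x y. g (x + y) = g x + g y) \<and> (\<forall>c x. g (c *s x) = c * g x)"

lemma functional_exists: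
  fixes B :: "('a::field^'n) set"
  assumes "vec.independent B"
  shows "\<exists>g. lin g \<and> (\<forall>x\<in>B. g x = f x)"
proof -
  obtain g where g: "Vector_Spaces.linear (*s) ((*)::'a\<Rightarrow>'a\<Rightarrow>'a) g" "\<forall>x\<in>B. g x = f x"
    using vector_space_pair.linear_independent_extend[of "(*s)" "(*)" B f] assms
    by (auto simp add: vector_space_pair_def vec.vector_space_axioms vector_space_over_itself.vector_space_axioms)
  have mh: "module_hom (*s) ((*)::'a::field\<Rightarrow>'a\<Rightarrow>'a) g" using g(1) by (simp add: Vector_Spaces.linear_def)
  have "lin g" unfolding lin_def using module_hom.add[OF mh] module_hom.scale[OF mh] by auto
  then show ?thesis using g(2) by blast
qed

lemma lin_expand:
  assumes "lin g"
  shows "g (x::'a::field^'n) = (\<Sum>i\<in>UNIV. x$i * g (axis i 1))"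
proof -
  have mh: "module_hom (*s) ((*)::'a::field\<Rightarrow>'a\<Rightarrow>'a) g"
    using assms by (unfold_locales) (auto simp: lin_def algebra_simps)
  have "g x = g (\<Sum>i\<in>UNIV. x$i *s axis i 1)" by (simp add: basis_expansion)
  also have "\<dots> = (\<Sum>i\<in>UNIV. x$i * g (axis i 1))"
    by (simp add: module_hom.sum[OF mh] module_hom.scale[OF mh])
  finally show ?thesis .
qed

definition ctr :: "('a::field^'n \<Rightarrow> 'a) \<Rightarrow> 'a^('n::finite\<times>'n) \<Rightarrow> 'a^'n" where
  "ctr g w = (\<chi> j. \<Sum>i\<in>UNIV. g (axis i 1) * w $ (i, j))"

lemma ctr_add: "ctr g (v + w) = ctr g v + ctr g w"
  by (simp add: vec_eq_iff ctr_def algebra_simps sum.distrib)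

lemma ctr_wedge:
  assumes "lin g"
  shows "ctr g (wedge x y) = g x *s y - g y *s x"
proof -
  have "\<And>j. (\<Sum>i\<in>UNIV. g (axis i 1) * (x$i * y$j - x$j * y$i))
     = (\<Sum>i\<in>UNIV. x$i * g (axis i 1)) * y$j - (\<Sum>i\<in>UNIV. y$i * g (axis i 1)) * x$j"
  proof -
    fix j
    have "(\<Sum>i\<in>UNIV. g (axis i 1) * (x$i * y$j - x$j * y$i))
       = (\<Sum>i\<in>UNIV. (x$i * g (axis i 1)) * y$j - (y$i * g (axis i 1)) * x$j)"
      by (rule sum.cong) (auto simp: algebra_simps)
    also have "\<dots> = (\<Sum>i\<in>UNIV. x$i * g (axis i 1)) * y$j - (\<Sum>i\<in>UNIV. y$i * g (axis i 1)) * x$j"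
      by (simp add: sum_subtractf sum_distrib_right)
    finally show "(\<Sum>i\<in>UNIV. g (axis i 1) * (x$i * y$j - x$j * y$i))
     = (\<Sum>i\<in>UNIV. x$i * g (axis i 1)) * y$j - (\<Sum>i\<in>UNIV. y$i * g (axis i 1)) * x$j" .
  qed
  then show ?thesis
    by (simp add: vec_eq_iff ctr_def wedge_def lin_expand[OF assms, of x] lin_expand[OF assms, of y])
qed

lemma ind4_indep:
  fixes a b c d :: "'a::field^'n"
  assumes "ind4 a b c d"
  shows "vec.independent {a,b,c,d}" "card {a,b,c,d} = 4"
proof -
  have d: "a \<noteq> b" "a \<noteq> c" "a \<noteq> d" "b \<noteq> c" "b \<noteq> d" "c \<noteq> d"
    using assms[unfolded ind4_def, rule_format, of 1 "-1" 0 0]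
      assms[unfolded ind4_def, rule_format, of 1 0 "-1" 0]
      assms[unfolded ind4_def, rule_format, of 1 0 0 "-1"]
      assms[unfolded ind4_def, rule_format, of 0 1 "-1" 0]
      assms[unfolded ind4_def, rule_format, of 0 1 0 "-1"]
      assms[unfolded ind4_def, rule_format, of 0 0 1 "-1"]
    by auto
  then show "card {a,b,c,d} = 4" by auto
  show "vec.independent {a,b,c,d}"
  proof
    assume "vec.dependent {a,b,c,d}"
    then obtain u where u: "\<exists>v\<in>{a,b,c,d}. u v \<noteq> 0" "(\<Sum>v\<in>{a,b,c,d}. u v *s v) = 0"
      using vec.dependent_finite[of "{a,b,c,d}"] by auto
    then have "u a *s a + u b *s b + u c *s c + u d *s d = 0" using d by (simp add: add.assoc)
    then show False using assms u(1) unfolding ind4_def by blast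
  qed
qed

lemma L1:
  fixes a b c d :: "'a::field^'n"
  assumes "ind4 a b c d"
  shows "wedge a b + wedge c d \<noteq> wedge s t"
proof
  assume eq: "wedge a b + wedge c d = wedge s t"
  note I = ind4_indep[OF assms]
  have S: "\<And>g. lin g \<Longrightarrow> g a *s b - g b *s a + (g c *s d - g d *s c) \<in> vec.span {s,t}"
  proof -
    fix g :: "'a^'n \<Rightarrow> 'a" assume g: "lin g"
    have "g a *s b - g b *s a + (g c *s d - g d *s c) = ctr g (wedge s t)"
      by (simp add: eq[symmetric] ctr_add ctr_wedge[OF g])
    also have "\<dots> = g s *s t - g t *s s" by (rule ctr_wedge[OF g])
    also have "\<dots> \<in> vec.span {s,t}"
      by (intro vec.span_diff vec.span_scale vec.span_base) auto
    finally show "g a *s b - g b *s a + (g c *s d - g d *s c) \<in> vec.span {s,t}" .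
  qed
  have d: "a \<noteq> b" "a \<noteq> c" "a \<noteq> d" "b \<noteq> c" "b \<noteq> d" "c \<noteq> d"
    using I(2) by (auto simp: card_insert_if split: if_splits)
  have G: "\<And>v. v \<in> {a,b,c,d} \<Longrightarrow> \<exists>g. lin g \<and> (\<forall>x\<in>{a,b,c,d}. g x = (if x = v then 1 else 0))"
    by (rule functional_exists[OF I(1)])
  obtain ga where ga: "lin ga" "\<forall>x\<in>{a,b,c,d}. ga x = (if x = a then 1 else 0)" using G by blast
  obtain gb where gb: "lin gb" "\<forall>x\<in>{a,b,c,d}. gb x = (if x = b then 1 else 0)" using G by blast
  obtain gc where gc: "lin gc" "\<forall>x\<in>{a,b,c,d}. gc x = (if x = c then 1 else 0)" using G by blast
  obtain gd where gd: "lin gd" "\<forall>x\<in>{a,b,c,d}. gd x = (if x = d then 1 else 0)" using G by blast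
  have "b \<in> vec.span {s,t}" using S[OF ga(1)] ga(2) d by auto
  moreover have "- a \<in> vec.span {s,t}" using S[OF gb(1)] gb(2) d by auto
  moreover have "d \<in> vec.span {s,t}" using S[OF gc(1)] gc(2) d by auto
  moreover have "- c \<in> vec.span {s,t}" using S[OF gd(1)] gd(2) d by auto
  ultimately have "\<And>v. v \<in> {a,b,c,d} \<Longrightarrow> v \<in> vec.span {s,t}"
    using vec.span_neg by fastforce
  then have "{a,b,c,d} \<subseteq> vec.span {s,t}" by blast
  then have "card {a,b,c,d} \<le> card {s,t}"
    using vec.independent_span_bound[of "{s,t}" "{a,b,c,d}"] I(1) by auto
  also have "\<dots> \<le> 2" by (simp add: card_insert_if)
  finally show False using I(2) by simp
qed


lemma solve3:
  fixes a b c d :: "'a::field^'n"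
  assumes "x *s a + y *s b + z *s c + w *s d = 0" "w \<noteq> 0"
  shows "d = (- x / w) *s a + (- y / w) *s b + (- z / w) *s c"
proof -
  have "(x *s a + y *s b + z *s c) + w *s d = 0" using assms(1) by simp
  then have e: "w *s d = - (x *s a + y *s b + z *s c)" by (metis add_eq_0_iff)
  have "d = (1/w) *s (w *s d)" using assms(2) by simp
  then have "d = (1/w) *s (- (x *s a + y *s b + z *s c))" using e by simp
  then show ?thesis by (simp add: algebra_simps)
qed


lemma solve2:
  fixes a b c :: "'a::field^'n"
  assumes "x *s a + y *s b + z *s c = 0" "z \<noteq> 0"
  shows "c = (- x / z) *s a + (- y / z) *s b"
  using solve3[of x a y b 0 a z c] assms by simp

lemma MEET:
  fixes a b c d :: "'a::field^'n"
  assumes ab: "wedge a b \<noteq> 0" and cd: "wedge c d \<noteq> 0"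
    and st: "wedge a b + wedge c d = wedge s t"
  shows "\<exists>z u v. z \<noteq> 0 \<and> wedge a b = wedge z u \<and> wedge c d = wedge z v"
proof (cases "\<exists>x y. c = x *s a + y *s b")
  case True
  then obtain x y where c: "c = x *s a + y *s b" by blast
  have "c \<noteq> 0" using cd by auto
  then obtain p q where "wedge a b = wedge c (p *s a + q *s b)" using wedge_factor[OF c] by blast
  then show ?thesis using \<open>c \<noteq> 0\<close> by blast
next
  case False
  note nc = False
  show ?thesis
  proof (cases "\<exists>x y z. d = x *s a + y *s b + z *s c")
    case True
    then obtain x y z where dd: "d = x *s a + y *s b + z *s c" by blast
    define w where "w = x *s a + y *s b"
    have "w \<noteq> 0"
    proof
      assume "w = 0"
      then have "d = z *s c" using dd w_def by simp
      then show False using cd by (simp add: wedge_lin)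
    qed
    then obtain p q where "wedge a b = wedge w (p *s a + q *s b)" using wedge_factor[OF w_def] by blast
    moreover have "wedge c d = wedge w (- c)"
      using dd by (simp add: w_def[symmetric] wedge_lin wedge_swap[of w c])
    ultimately show ?thesis using \<open>w \<noteq> 0\<close> by blast
  next
    case False
    note nd = False
    have "ind4 a b c d"
      unfolding ind4_def
    proof (intro allI impI)
      fix x y z w assume h: "x *s a + y *s b + z *s c + w *s d = 0"
      have w0: "w = 0"
      proof (rule ccontr)
        assume "w \<noteq> 0"
        then show False using solve3[OF h] nd by blast
      qed
      have z0: "z = 0"
      proof (rule ccontr)
        assume "z \<noteq> 0"
        then have "c = (- x / z) *s a + (- y / z) *s b" using solve2[of x a y b z c] h w0 by simp
        then show False using nc by blast
      qed
      have "x *s a + y *s b = 0" using h w0 z0 by simp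
      then show "x = 0 \<and> y = 0 \<and> z = 0 \<and> w = 0"
        using wedge_ne0_ind2[OF ab] w0 z0 unfolding ind2_def by blast
    qed
    then show ?thesis using L1 st by blast
  qed
qed

definition isw :: "'a::field^('n::finite\<times>'n) \<Rightarrow> bool" where
  "isw w \<longleftrightarrow> (\<exists>a b. w = wedge a b)"

definition meet :: "'a::field^('n::finite\<times>'n) \<Rightarrow> 'a^('n\<times>'n) \<Rightarrow> bool" where
  "meet f g \<longleftrightarrow> (\<exists>z u v. z \<noteq> 0 \<and> f = wedge z u \<and> g = wedge z v)"

lemma MEETE:
  assumes "f \<noteq> 0" "isw f" "g \<noteq> 0" "isw g" "isw (f - g)"
  shows "meet f g"
proof -
  obtain a b where ab: "f = wedge a b" using assms(2) isw_def by blast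
  obtain c d where cd: "g = wedge c d" using assms(4) isw_def by blast
  obtain s t where st: "f - g = wedge s t" using assms(5) isw_def by blast
  have "wedge a b + wedge c (- d) = wedge s t" using ab cd st by (simp add: wedge_lin)
  moreover have "wedge c (- d) \<noteq> 0" using assms(3) cd by (simp add: wedge_lin)
  ultimately obtain z u v where "z \<noteq> 0" "wedge a b = wedge z u" "wedge c (- d) = wedge z v"
    using MEET assms(1) ab by blast
  then have "f = wedge z u" "g = wedge z (- v)" using ab cd by (auto simp: wedge_lin)
      (metis minus_minus)
  then show ?thesis using \<open>z \<noteq> 0\<close> meet_def by blast
qed

lemma isw_scale: "isw w \<Longrightarrow> isw (k *s w)"
  unfolding isw_def by (metis wedge_scale1)
lemma isw_neg: "isw w \<Longrightarrow> isw (- w)"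
  unfolding isw_def by (metis wedge_neg1)
lemma isw_zero[simp]: "isw 0"
  unfolding isw_def by (metis wedge_self)
lemma decomposable_isw: "decomposable w \<longleftrightarrow> w \<noteq> 0 \<and> isw w"
  by (simp add: decomposable_def isw_def)


definition Uset :: "'a::field^'n \<Rightarrow> 'a^'n \<Rightarrow> 'a^'n \<Rightarrow> ('a^'n) set" where
  "Uset p s t = {v. \<exists>x y z. v = x *s p + y *s s + z *s t}"

lemma Uset_lin:
  assumes "a \<in> Uset p s t" "b \<in> Uset p s t"
  shows "c *s a + d *s b \<in> Uset p s t"
proof -
  obtain x1 y1 z1 where a: "a = x1 *s p + y1 *s s + z1 *s t" using assms(1) Uset_def by blast
  obtain x2 y2 z2 where b: "b = x2 *s p + y2 *s s + z2 *s t" using assms(2) Uset_def by blast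
  have "c *s a + d *s b = (c*x1 + d*x2) *s p + (c*y1 + d*y2) *s s + (c*z1 + d*z2) *s t"
    by (simp add: a b algebra_simps)
  then show ?thesis unfolding Uset_def by blast
qed

lemma Uset_p: "p \<in> Uset p s t"
  unfolding Uset_def by (rule CollectI, rule exI[of _ 1], rule exI[of _ 0], rule exI[of _ 0]) simp

lemma ind3_ind2:
  assumes "ind3 p s t" shows "ind2 p s" "ind2 p t"
proof -
  show "ind2 p s" unfolding ind2_def
  proof (intro allI impI)
    fix x y assume "x *s p + y *s s = 0"
    then have "x *s p + y *s s + 0 *s t = 0" by simp
    then show "x = 0 \<and> y = 0" using assms unfolding ind3_def by blast
  qed
  show "ind2 p t" unfolding ind2_def
  proof (intro allI impI)
    fix x y assume "x *s p + y *s t = 0"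
    then have "x *s p + 0 *s s + y *s t = 0" by simp
    then show "x = 0 \<and> y = 0" using assms unfolding ind3_def by blast
  qed
qed

lemma meet_span:
  fixes p s :: "'a::field^'n"
  assumes "meet h (wedge p s)" "wedge p s \<noteq> 0"
  shows "\<exists>z u x y. z \<noteq> 0 \<and> h = wedge z u \<and> z = x *s p + y *s s"
proof -
  obtain z u v where z: "z \<noteq> 0" "h = wedge z u" "wedge p s = wedge z v" using assms(1) meet_def by blast
  have "z \<in> Vw (wedge p s)" using z(3) by (simp add: Vw_def wedge3_left)
  then show ?thesis using Vw_wedge[OF assms(2)] z by blast
qed

lemma FAM:
  fixes p s t :: "'a::field^'n"
  assumes ind: "ind3 p s t"
    and Fh: "\<forall>h\<in>F. h \<noteq> 0 \<and> isw h"
    and F0: "wedge p s \<in> F" and F1: "wedge p t \<in> F"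
    and Fm: "\<forall>h\<in>F. \<forall>h'\<in>F. meet h h'"
  shows "(\<forall>h\<in>F. \<exists>y. h = wedge p y) \<or>
         (\<forall>h\<in>F. \<exists>a b. a \<in> Uset p s t \<and> b \<in> Uset p s t \<and> h = wedge a b)"
proof -
  define P where "P h \<longleftrightarrow> (\<exists>y. h = wedge p y)" for h
  define Q where "Q h \<longleftrightarrow> (\<exists>a b. a \<in> Uset p s t \<and> b \<in> Uset p s t \<and> h = wedge a b)" for h
  have ps: "wedge p s \<noteq> 0" and pt: "wedge p t \<noteq> 0"
    using ind3_ind2[OF ind] ind2_wedge by auto
  have T: "P h \<or> Q h" if hF: "h \<in> F" for h
  proof -
    have h0: "h \<noteq> 0" using Fh hF by auto
    obtain z1 u1 x1 y1 where z1: "z1 \<noteq> 0" "h = wedge z1 u1" "z1 = x1 *s p + y1 *s s"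
      using meet_span[OF _ ps] Fm hF F0 by blast
    obtain z2 u2 x2 y2 where z2: "z2 \<noteq> 0" "h = wedge z2 u2" "z2 = x2 *s p + y2 *s t"
      using meet_span[OF _ pt] Fm hF F1 by blast
    show ?thesis
    proof (cases "wedge z1 z2 = 0")
      case True
      then obtain k where k: "z2 = k *s z1" using wedge_zero_dep z1(1) by blast
      have "k \<noteq> 0" using k z2(1) by auto
      have "(k * x1 - x2) *s p + (k * y1) *s s + (- y2) *s t = 0"
        using k z1(3) z2(3) by (simp add: algebra_simps)
      then have "k * y1 = 0" using ind unfolding ind3_def by blast
      then have "y1 = 0" using \<open>k \<noteq> 0\<close> by simp
      then have "h = wedge p (x1 *s u1)" using z1 by (simp add: wedge_lin)
      then show ?thesis unfolding P_def by blast
    next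
      case False
      have i2: "ind2 z1 z2" using False by (rule wedge_ne0_ind2)
      have "z2 \<in> Vw h" using z2(2) by (simp add: Vw_def wedge3_left)
      then obtain c d where cd: "z2 = c *s z1 + d *s u1" using Vw_wedge h0 z1(2) by blast
      have "d \<noteq> 0"
      proof
        assume "d = 0"
        then have "c *s z1 + (-1) *s z2 = 0" using cd by simp
        then show False using i2 unfolding ind2_def by fastforce
      qed
      have "wedge z1 z2 = d *s h" using cd z1(2) by (simp add: wedge_lin)
      then have "h = wedge ((1/d) *s z1) z2" using \<open>d \<noteq> 0\<close> by (simp add: wedge_lin)
      moreover have "(1/d) *s z1 \<in> Uset p s t" unfolding Uset_def
        using z1(3) by (intro CollectI exI[of _ "x1/d"] exI[of _ "y1/d"] exI[of _ 0]) (simp add: algebra_simps)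
      moreover have "z2 \<in> Uset p s t" unfolding Uset_def
        using z2(3) by (intro CollectI exI[of _ "x2"] exI[of _ 0] exI[of _ y2]) simp
      ultimately show ?thesis unfolding Q_def by blast
    qed
  qed
  have M: False if hF: "h \<in> F" "\<not> P h" and h'F: "h' \<in> F" "\<not> Q h'" for h h'
  proof -
    obtain a b where ab: "a \<in> Uset p s t" "b \<in> Uset p s t" "h = wedge a b"
      using T[OF hF(1)] hF(2) Q_def by blast
    obtain y where y: "h' = wedge p y" using T[OF h'F(1)] h'F(2) P_def by blast
    have yU: "y \<notin> Uset p s t" using h'F(2) y Uset_p unfolding Q_def by blast
    obtain z u v where z: "z \<noteq> 0" "h = wedge z u" "h' = wedge z v" using Fm hF h'F meet_def by blast
    have "z \<in> Vw h'" using z(3) by (simp add: Vw_def wedge3_left)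
    then obtain \<alpha> \<beta> where zz: "z = \<alpha> *s p + \<beta> *s y" using Vw_wedge Fh h'F y by blast
    have "z \<in> Vw h" using z(2) by (simp add: Vw_def wedge3_left)
    then obtain c d where "z = c *s a + d *s b" using Vw_wedge Fh hF ab(3) by blast
    then have zU: "z \<in> Uset p s t" using Uset_lin ab by blast
    show False
    proof (cases "\<beta> = 0")
      case True
      then have "h = wedge p (\<alpha> *s u)" using zz z(2) by (simp add: wedge_lin)
      then show False using hF(2) P_def by blast
    next
      case False
      have "\<alpha> *s p + (-1) *s z + \<beta> *s y = 0" using zz by simp
      then have "y = (- \<alpha> / \<beta>) *s p + (- (-1) / \<beta>) *s z" using solve2 False by blast
      then have "y \<in> Uset p s t" using Uset_lin[OF Uset_p zU] by metis
      then show False using yU by blast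
    qed
  qed
  show ?thesis
  proof (cases "\<forall>h\<in>F. P h")
    case True then show ?thesis unfolding P_def by blast
  next
    case False
    then obtain h where "h \<in> F" "\<not> P h" by blast
    then have "\<forall>h'\<in>F. Q h'" using M by blast
    then show ?thesis unfolding Q_def by blast
  qed
qed


lemma subspace_scale_inv:
  fixes E :: "('a::field ^ 'n) set"
  assumes "vec.subspace E" "k \<noteq> 0" "k *s x \<in> E" shows "x \<in> E"
proof -
  have "(1/k) *s (k *s x) \<in> E" by (rule vec.subspace_scale[OF assms(1,3)])
  then show ?thesis using assms(2) by simp
qed

lemma E1_decomp:
  fixes E E1 :: "('a::field ^ ('n::finite \<times> 'n)) set"
  assumes E: "vec.subspace E" and E1: "vec.subspace E1" and sub: "E \<subseteq> E1"
    and dim: "vec.dim E1 = vec.dim E + 1" and w0: "w0 \<in> E1" "w0 \<notin> E"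
    and w: "w \<in> E1"
  shows "\<exists>k e. e \<in> E \<and> w = k *s w0 + e"
proof -
  have "vec.span (insert w0 E) \<subseteq> E1"
    using sub w0 E1 by (intro vec.span_minimal) auto
  moreover have "vec.dim (vec.span (insert w0 E)) = vec.dim E + 1"
  proof -
    have "vec.span E = E" using E by simp
    then show ?thesis using w0(2) by (simp add: vec.dim_insert del: vec.span_eq_iff)
  qed
  ultimately have "vec.span (insert w0 E) = E1"
    using vec.subspace_dim_equal[of "vec.span (insert w0 E)" E1] E1 dim by simp
  then have "w \<in> vec.span (insert w0 E)" using w by simp
  then obtain k where "w - k *s w0 \<in> vec.span E" unfolding vec.span_insert by blast
  then have "w - k *s w0 \<in> E" using vec.span_eq_iff[THEN iffD2, OF E] by simp
  moreover have "w = k *s w0 + (w - k *s w0)" by simp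
  ultimately show ?thesis by blast
qed

lemma COUNT:
  fixes E E1 :: "('a::{field,finite} ^ ('n::finite \<times> 'n)) set"
  assumes E: "vec.subspace E" and E1: "vec.subspace E1" and sub: "E \<subseteq> E1"
    and dim: "vec.dim E1 = vec.dim E + 1" and w0: "w0 \<in> E1" "w0 \<notin> E"
  shows "card {w \<in> E1 - E. decomposable w} = (CARD('a) - 1) * card {e \<in> E. decomposable (w0 + e)}"
proof -
  define D where "D = {e \<in> E. decomposable (w0 + e)}"
  define f where "f = (\<lambda>(b::'a, e). b *s (w0 + e))"
  have img: "{w \<in> E1 - E. decomposable w} = f ` ((UNIV - {0}) \<times> D)"
  proof (intro equalityI subsetI)
    fix w assume "w \<in> {w \<in> E1 - E. decomposable w}"
    then have w: "w \<in> E1" "w \<notin> E" "decomposable w" by auto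
    obtain k e where ke: "e \<in> E" "w = k *s w0 + e" using E1_decomp[OF E E1 sub dim w0 w(1)] by blast
    have k: "k \<noteq> 0" using ke w(2) by auto
    define e' where "e' = (1/k) *s e"
    have e': "e' \<in> E" using ke E by (simp add: e'_def vec.subspace_scale)
    have we: "w = k *s (w0 + e')" using ke k by (simp add: e'_def algebra_simps)
    have "w0 + e' = (1/k) *s w" using we k by simp
    then have "decomposable (w0 + e')" using w(3) k
      by (simp add: decomposable_isw isw_scale)
    then have "(k, e') \<in> (UNIV - {0}) \<times> D" using k e' D_def by auto
    then show "w \<in> f ` ((UNIV - {0}) \<times> D)" using we f_def by force
  next
    fix w assume "w \<in> f ` ((UNIV - {0}) \<times> D)"
    then obtain b e where be: "b \<noteq> 0" "e \<in> E" "decomposable (w0 + e)" "w = b *s (w0 + e)"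
      using D_def f_def by auto
    have "w \<in> E1" using be sub w0 E1 by (auto intro!: vec.subspace_scale vec.subspace_add)
    moreover have "w \<notin> E"
    proof
      assume "w \<in> E"
      then have "(1/b) *s w \<in> E" using E vec.subspace_scale by blast
      then have "w0 + e \<in> E" using be by simp
      then have "(w0 + e) - e \<in> E" using E be vec.subspace_diff by blast
      then show False using w0 by simp
    qed
    moreover have "decomposable w" using be(1,3) unfolding be(4) decomposable_isw
      by (metis isw_scale vec.scale_eq_0_iff)
    ultimately show "w \<in> {w \<in> E1 - E. decomposable w}" by simp
  qed
  have inj: "inj_on f ((UNIV - {0}) \<times> D)"
  proof (rule inj_onI)
    fix x y assume x: "x \<in> (UNIV - {0}) \<times> D" and y: "y \<in> (UNIV - {0}) \<times> D" and fxy: "f x = f y"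
    obtain b e where xb: "x = (b, e)" "b \<noteq> 0" "e \<in> E" using x D_def by auto
    obtain b' e' where yb: "y = (b', e')" "b' \<noteq> 0" "e' \<in> E" using y D_def by auto
    have eq: "b *s (w0 + e) = b' *s (w0 + e')" using fxy xb yb f_def by simp
    have bb: "b = b'"
    proof (rule ccontr)
      assume "b \<noteq> b'"
      have "(b - b') *s w0 = b' *s e' - b *s e" using eq by (simp add: algebra_simps)
      moreover have "b' *s e' - b *s e \<in> E" using xb yb E
        by (intro vec.subspace_diff vec.subspace_scale) auto
      ultimately have "(b - b') *s w0 \<in> E" by simp
      moreover have "b - b' \<noteq> 0" using \<open>b \<noteq> b'\<close> by simp
      ultimately have "w0 \<in> E" using subspace_scale_inv[OF E] by blast
      then show False using w0(2) by blast
    qed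
    then have "w0 + e = w0 + e'" using eq xb by simp
    then show "x = y" using xb yb bb by simp
  qed
  have "card {w \<in> E1 - E. decomposable w} = card ((UNIV - {0::'a}) \<times> D)"
    using img card_image[OF inj] by simp
  also have "\<dots> = (CARD('a) - 1) * card D"
    by (simp add: card_cartesian_product card_Diff_singleton)
  finally show ?thesis unfolding D_def .
qed


lemma CARD_DIM:
  fixes S :: "('a::{field,finite} ^ 'm::finite) set"
  assumes "vec.subspace S" "vec.dim S \<le> 2"
  shows "card S \<le> CARD('a)^2"
proof -
  obtain B where B: "B \<subseteq> S" "vec.independent B" "S \<subseteq> vec.span B" "card B = vec.dim S"
    using vec.basis_exists by blast
  have fB: "finite B" by simp
  define g where "g = (\<lambda>u. \<Sum>v\<in>B. u v *s v)"
  have "S \<subseteq> g ` (PiE B (\<lambda>_. UNIV))"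
  proof
    fix x assume "x \<in> S"
    then have "x \<in> range g" using B(3) vec.span_finite[OF fB] g_def by auto
    then obtain u where u: "x = g u" by blast
    have "g u = g (restrict u B)" unfolding g_def by (rule sum.cong) auto
    moreover have "restrict u B \<in> PiE B (\<lambda>_. UNIV)" by simp
    ultimately show "x \<in> g ` (PiE B (\<lambda>_. UNIV))" using u by blast
  qed
  then have "card S \<le> card (PiE B (\<lambda>_. UNIV::'a set))"
    by (meson card_image_le card_mono finite_PiE finite_imageI fB finite order_trans)
  also have "\<dots> = CARD('a) ^ card B" by (simp add: card_PiE fB)
  also have "\<dots> \<le> CARD('a)^2" using B(4) assms(2)
    by (intro power_increasing) (auto simp: Suc_leI)
  finally show ?thesis .
qed

lemma CARD2:
  fixes u v :: "'a::{field,finite} ^ 'm::finite"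
  assumes "ind2 u v"
  shows "card {x *s u + y *s v | x y. True} = CARD('a)^2"
proof -
  define g where "g = (\<lambda>(x::'a, y::'a). x *s u + y *s v)"
  have "{x *s u + y *s v | x y. True} = g ` UNIV" unfolding g_def by auto
  moreover have "inj g"
  proof (rule injI)
    fix a b assume "g a = g b"
    obtain x y where a: "a = (x, y)" by (cases a)
    obtain x' y' where b: "b = (x', y')" by (cases b)
    have "(x - x') *s u + (y - y') *s v = 0" using \<open>g a = g b\<close> a b g_def
      by (simp add: algebra_simps)
    then have "x - x' = 0 \<and> y - y' = 0" using assms unfolding ind2_def by blast
    then show "a = b" using a b by simp
  qed
  ultimately have "card {x *s u + y *s v | x y. True} = card (UNIV :: ('a \<times> 'a) set)"
    by (simp add: card_image)
  then show ?thesis by (simp add: power2_eq_square)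
qed

lemma WEXP:
  assumes "a \<in> Uset p s t" "b \<in> Uset p s t"
  shows "\<exists>x y z. wedge a b = x *s wedge p s + y *s wedge p t + z *s wedge s t"
proof -
  obtain x1 y1 z1 where a: "a = x1 *s p + y1 *s s + z1 *s t" using assms(1) Uset_def by blast
  obtain x2 y2 z2 where b: "b = x2 *s p + y2 *s s + z2 *s t" using assms(2) Uset_def by blast
  have "wedge a b = (x1*y2 - y1*x2) *s wedge p s + (x1*z2 - z1*x2) *s wedge p t + (y1*z2 - z1*y2) *s wedge s t"
    by (simp add: a b vec_eq_iff wedge_def algebra_simps)
  then show ?thesis by blast
qed

lemma W3ISW: "isw (x *s wedge p s + y *s wedge p t + z *s wedge s t)"
proof (cases "x = 0")
  case True
  have "x *s wedge p s + y *s wedge p t + z *s wedge s t = wedge (y *s p + z *s s) t"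
    using True by (simp add: vec_eq_iff wedge_def algebra_simps)
  then show ?thesis unfolding isw_def by blast
next
  case False
  have "x *s wedge p s + y *s wedge p t + z *s wedge s t = wedge (p + (- z / x) *s t) (x *s s + y *s t)"
    using False by (simp add: vec_eq_iff wedge_def field_simps)
  then show ?thesis unfolding isw_def by blast
qed

lemma isw_E: "decomposable_subspace E \<Longrightarrow> e \<in> E \<Longrightarrow> isw e"
  unfolding decomposable_subspace_def by (cases "e = 0") (auto simp: decomposable_isw)


lemma indep3:
  fixes a b c :: "'a::field^'m"
  assumes "vec.independent {a,b,c}" "a \<noteq> b" "a \<noteq> c" "b \<noteq> c"
  shows "ind3 a b c"
  unfolding ind3_def
proof (intro allI impI)
  fix x y z assume h: "x *s a + y *s b + z *s c = 0"
  show "x = 0 \<and> y = 0 \<and> z = 0"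
  proof (rule ccontr)
    assume nz: "\<not> (x = 0 \<and> y = 0 \<and> z = 0)"
    define u where "u v = (if v = a then x else if v = b then y else z)" for v
    have "(\<Sum>v\<in>{a,b,c}. u v *s v) = x *s a + y *s b + z *s c"
      using assms(2-4) by (simp add: u_def add.assoc)
    moreover have "\<exists>v\<in>{a,b,c}. u v \<noteq> 0" using nz assms(2-4) u_def by auto
    ultimately have "vec.dependent {a,b,c}" using h vec.dependent_finite[of "{a,b,c}"] by auto
    then show False using assms(1) by blast
  qed
qed

lemma three_elems:
  assumes "finite B" "card B \<ge> 3"
  obtains a b c where "a \<in> B" "b \<in> B" "c \<in> B" "a \<noteq> b" "a \<noteq> c" "b \<noteq> c"
proof -
  have "B \<noteq> {}" using assms by auto
  then obtain a where a: "a \<in> B" by blast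
  have "card (B - {a}) \<ge> 2" using assms a by (simp add: card_Diff_singleton)
  then have "B - {a} \<noteq> {}"
  proof (intro notI)
    assume h: "B - {a} = {}"
    show False using \<open>card (B - {a}) \<ge> _\<close> unfolding h by simp
  qed
  then obtain b where b: "b \<in> B - {a}" by blast
  have "card (B - {a} - {b}) \<ge> 1" using assms a b \<open>card (B - {a}) \<ge> 2\<close>
    by (simp add: card_Diff_singleton)
  then have "B - {a} - {b} \<noteq> {}"
  proof (intro notI)
    assume h: "B - {a} - {b} = {}"
    show False using \<open>card (B - {a} - {b}) \<ge> _\<close> unfolding h by simp
  qed
  then obtain c where c: "c \<in> B - {a} - {b}" by blast
  show ?thesis using that a b c by blast
qed

lemma STAR:
  fixes E :: "('a::field ^ ('n::finite \<times> 'n)) set"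
  assumes E: "vec.subspace E" and decE: "decomposable_subspace E"
    and ind: "ind4 p w1 w2 w3"
    and g: "wedge p w1 \<in> E" "wedge p w2 \<in> E" "wedge p w3 \<in> E"
    and f: "f \<in> E" "f \<noteq> 0"
  shows "\<exists>y. f = wedge p y"
proof (rule ccontr)
  assume nst: "\<not> (\<exists>y. f = wedge p y)"
  have i2: "ind2 p w1" "ind2 p w2" "ind2 p w3"
  proof -
    show "ind2 p w1" unfolding ind2_def
    proof (intro allI impI)
      fix x y assume "x *s p + y *s w1 = 0"
      then have "x *s p + y *s w1 + 0 *s w2 + 0 *s w3 = 0" by simp
      then show "x = 0 \<and> y = 0" using ind ind4_def by blast
    qed
    show "ind2 p w2" unfolding ind2_def
    proof (intro allI impI)
      fix x y assume "x *s p + y *s w2 = 0"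
      then have "x *s p + 0 *s w1 + y *s w2 + 0 *s w3 = 0" by simp
      then show "x = 0 \<and> y = 0" using ind ind4_def by blast
    qed
    show "ind2 p w3" unfolding ind2_def
    proof (intro allI impI)
      fix x y assume "x *s p + y *s w3 = 0"
      then have "x *s p + 0 *s w1 + 0 *s w2 + y *s w3 = 0" by simp
      then show "x = 0 \<and> y = 0" using ind ind4_def by blast
    qed
  qed
  have Z: "\<exists>z u al be. z \<noteq> 0 \<and> f = wedge z u \<and> z = al *s p + be *s w \<and> be \<noteq> 0"
    if w: "wedge p w \<in> E" "ind2 p w" for w
  proof -
    have pw: "wedge p w \<noteq> 0" using ind2_wedge w(2) by blast
    have "f - wedge p w \<in> E" using vec.subspace_diff[OF E f(1) w(1)] .
    then have "meet f (wedge p w)"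
      using f pw isw_E[OF decE] by (intro MEETE) (auto simp: isw_def)
    then obtain z u v where z: "z \<noteq> 0" "f = wedge z u" "wedge p w = wedge z v" using meet_def by blast
    have "z \<in> Vw (wedge p w)" using z(3) by (simp add: Vw_def wedge3_left)
    then obtain al be where zz: "z = al *s p + be *s w" using Vw_wedge[OF pw] by blast
    have "be \<noteq> 0"
    proof
      assume "be = 0"
      then have "f = wedge p (al *s u)" using z zz by (simp add: wedge_lin)
      then show False using nst by blast
    qed
    then show ?thesis using z zz by blast
  qed
  obtain z1 u1 a1 b1 where z1: "z1 \<noteq> 0" "f = wedge z1 u1" "z1 = a1 *s p + b1 *s w1" "b1 \<noteq> 0"
    using Z[OF g(1) i2(1)] by blast
  obtain z2 u2 a2 b2 where z2: "z2 \<noteq> 0" "f = wedge z2 u2" "z2 = a2 *s p + b2 *s w2" "b2 \<noteq> 0"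
    using Z[OF g(2) i2(2)] by blast
  obtain z3 u3 a3 b3 where z3: "z3 \<noteq> 0" "f = wedge z3 u3" "z3 = a3 *s p + b3 *s w3" "b3 \<noteq> 0"
    using Z[OF g(3) i2(3)] by blast
  have "z2 \<in> Vw f" using z2(2) by (simp add: Vw_def wedge3_left)
  then obtain l2 m2 where l2: "z2 = l2 *s z1 + m2 *s u1" using Vw_wedge f(2) z1(2) by blast
  have "z3 \<in> Vw f" using z3(2) by (simp add: Vw_def wedge3_left)
  then obtain l3 m3 where l3: "z3 = l3 *s z1 + m3 *s u1" using Vw_wedge f(2) z1(2) by blast
  obtain c1 c2 c3 where cc: "c1 *s z1 + c2 *s z2 + c3 *s z3 = 0" "c2 \<noteq> 0 \<or> c3 \<noteq> 0"
  proof (cases "m2 = 0")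
    case True
    have "(- l2) *s z1 + 1 *s z2 + 0 *s z3 = 0" using l2 True by simp
    then show ?thesis using that by fastforce
  next
    case False
    have "(- (m2*l3 - m3*l2)) *s z1 + (- m3) *s z2 + m2 *s z3 = 0"
      using l2 l3 by (simp add: vec_eq_iff algebra_simps)
    then show ?thesis using that False by fastforce
  qed
  have "(c1*a1 + c2*a2 + c3*a3) *s p + (c1*b1) *s w1 + (c2*b2) *s w2 + (c3*b3) *s w3 = 0"
    using cc(1) z1(3) z2(3) z3(3) by (simp add: vec_eq_iff algebra_simps)
  then have "c2*b2 = 0" "c3*b3 = 0" using ind unfolding ind4_def by blast+
  then show False using cc(2) z2(4) z3(4) by simp
qed


lemma subspace_range_wedge: "vec.subspace (range (wedge p))"
proof (rule vec.subspaceI)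
  show "0 \<in> range (wedge p)" by (metis rangeI wedge_zero2)
next
  fix x y assume "x \<in> range (wedge p)" "y \<in> range (wedge p)"
  then show "x + y \<in> range (wedge p)" by (auto simp: wedge_add2[symmetric])
next
  fix c x assume "x \<in> range (wedge p)"
  then show "c *s x \<in> range (wedge p)" by (auto simp: wedge_scale2[symmetric])
qed

lemma UPPER:
  fixes E E1 :: "('a::{field,finite} ^ ('n::finite \<times> 'n)) set"
  assumes E: "vec.subspace E" and E1: "vec.subspace E1" and sub: "E \<subseteq> E1"
    and dim: "vec.dim E1 = vec.dim E + 1"
    and decE: "decomposable_subspace E"
    and ndecE1: "\<not> decomposable_subspace E1"
    and w0: "w0 \<in> E1" "w0 \<notin> E" "decomposable w0"
  shows "card {e \<in> E. decomposable (w0 + e)} \<le> CARD('a)^2"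
proof -
  define D where "D = {e \<in> E. decomposable (w0 + e)}"
  have qpos: "CARD('a) ^ 2 \<ge> 1" by simp
  show ?thesis
  proof (cases "D \<subseteq> {0}")
    case True
    then have "card D \<le> card {0::'a^('n\<times>'n)}" by (intro card_mono) auto
    then have "card D \<le> 1" by simp
    then show ?thesis using qpos unfolding D_def by linarith
  next
    case False
    then obtain e1 where e1: "e1 \<in> E" "decomposable (w0 + e1)" "e1 \<noteq> 0" using D_def by blast
    define F where "F = (\<lambda>e. w0 + e) ` D"
    have Fh: "\<forall>h\<in>F. h \<noteq> 0 \<and> isw h" using F_def D_def decomposable_isw by auto
    have Fm: "\<forall>h\<in>F. \<forall>h'\<in>F. meet h h'"
    proof (intro ballI)
      fix h h' assume h: "h \<in> F" and h': "h' \<in> F"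
      obtain e where e: "e \<in> E" "h = w0 + e" using h F_def D_def by blast
      obtain e' where e': "e' \<in> E" "h' = w0 + e'" using h' F_def D_def by blast
      have "h - h' = e - e'" using e e' by simp
      then have "isw (h - h')" using isw_E[OF decE] vec.subspace_diff[OF E e(1) e'(1)] by simp
      then show "meet h h'" using Fh h h' by (intro MEETE) auto
    qed
    have D0: "0 \<in> D" using D_def w0(3) vec.subspace_0[OF E] by simp
    have wF: "w0 \<in> F" using D0 F_def by force
    have w1F: "w0 + e1 \<in> F" using e1 F_def D_def by blast
    obtain p s t where pst: "p \<noteq> 0" "w0 = wedge p s" "w0 + e1 = wedge p t"
      using Fm wF w1F meet_def by blast
    have w00: "w0 \<noteq> 0" using w0(3) decomposable_def by blast
    have ind: "ind3 p s t"
      unfolding ind3_def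
    proof (intro allI impI)
      fix x y z assume h: "x *s p + y *s s + z *s t = 0"
      have z0: "z = 0"
      proof (rule ccontr)
        assume "z \<noteq> 0"
        then have "t = (- x / z) *s p + (- y / z) *s s" using solve2[OF h] by blast
        then have "wedge p t = (- y / z) *s w0" using pst by (simp add: wedge_lin)
        then have "e1 = (- y / z - 1) *s w0" using pst by (simp add: algebra_simps)
        moreover have c0: "- y / z - 1 \<noteq> 0"
        proof
          assume "- y / z - 1 = 0"
          then have "e1 = 0" using \<open>e1 = (- y / z - 1) *s w0\<close> by (metis vec.scale_zero_left)
          then show False using e1(3) by blast
        qed
        ultimately have "(- y / z - 1) *s w0 \<in> E" using e1(1) by simp
        then have "w0 \<in> E" by (rule subspace_scale_inv[OF E c0])
        then show False using w0(2) by blast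
      qed
      then have "x *s p + y *s s = 0" using h by simp
      then show "x = 0 \<and> y = 0 \<and> z = 0"
        using wedge_ne0_ind2[of p s] pst w00 z0 unfolding ind2_def by blast
    qed
    have wps: "wedge p s \<in> F" and wpt: "wedge p t \<in> F" using wF w1F pst by auto
    have FAMr: "(\<forall>h\<in>F. \<exists>y. h = wedge p y) \<or>
         (\<forall>h\<in>F. \<exists>a b. a \<in> Uset p s t \<and> b \<in> Uset p s t \<and> h = wedge a b)"
      by (rule FAM[OF ind Fh wps wpt Fm])
    then show ?thesis
    proof
      assume A: "\<forall>h\<in>F. \<exists>y. h = wedge p y"
      define S where "S = E \<inter> range (wedge p)"
      have Ssub: "vec.subspace S" unfolding S_def
        by (rule vec.subspace_inter[OF E subspace_range_wedge])
      have DS: "D \<subseteq> S"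
      proof
        fix e assume eD: "e \<in> D"
        then have "w0 + e \<in> F" using F_def by blast
        then obtain y where "w0 + e = wedge p y" using A by blast
        then have "e = wedge p (y - s)" using pst by (simp add: wedge_lin algebra_simps)
        then show "e \<in> S" using eD D_def S_def by blast
      qed
      have dS: "vec.dim S \<le> 2"
      proof (rule ccontr)
        assume "\<not> vec.dim S \<le> 2"
        obtain B where B: "B \<subseteq> S" "vec.independent B" "S \<subseteq> vec.span B" "card B = vec.dim S"
          using vec.basis_exists by blast
        have "card B \<ge> 3" using B(4) \<open>\<not> vec.dim S \<le> 2\<close> by simp
        then obtain g1 g2 g3 where g: "g1 \<in> B" "g2 \<in> B" "g3 \<in> B" "g1 \<noteq> g2" "g1 \<noteq> g3" "g2 \<noteq> g3"
          using three_elems[OF finite_class.finite \<open>card B \<ge> 3\<close>] by blast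
        have "vec.independent {g1,g2,g3}" using B(2) g vec.independent_mono[of B "{g1,g2,g3}"] by auto
        then have i3: "ind3 g1 g2 g3" using indep3 g by blast
        obtain v1 v2 v3 where v: "g1 = wedge p v1" "g2 = wedge p v2" "g3 = wedge p v3"
          using g B(1) S_def by blast
        have gE: "wedge p v1 \<in> E" "wedge p v2 \<in> E" "wedge p v3 \<in> E" using g B(1) S_def v by auto
        have i4: "ind4 p v1 v2 v3"
          unfolding ind4_def
        proof (intro allI impI)
          fix a b c d assume h: "a *s p + b *s v1 + c *s v2 + d *s v3 = 0"
          have "wedge p (a *s p + b *s v1 + c *s v2 + d *s v3) = 0" using h by simp
          then have "b *s g1 + c *s g2 + d *s g3 = 0" using v by (simp add: wedge_lin)
          then have bcd: "b = 0" "c = 0" "d = 0" using i3 unfolding ind3_def by blast+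
          then have "a *s p = 0" using h by simp
          then show "a = 0 \<and> b = 0 \<and> c = 0 \<and> d = 0" using bcd pst(1) by simp
        qed
        have star: "\<forall>f\<in>E. f \<noteq> 0 \<longrightarrow> (\<exists>y. f = wedge p y)"
          using STAR[OF E decE i4 gE] by blast
        have "decomposable_subspace E1"
          unfolding decomposable_subspace_def
        proof (intro ballI impI)
          fix w assume w: "w \<in> E1" "w \<noteq> 0"
          obtain k e where ke: "e \<in> E" "w = k *s w0 + e" using E1_decomp[OF E E1 sub dim w0(1,2) w(1)] by blast
          have "\<exists>y. e = wedge p y"
          proof (cases "e = 0")
            case True then show ?thesis by (metis wedge_zero2)
          next
            case False then show ?thesis using star ke(1) by blast
          qed
          then obtain y where y: "e = wedge p y" by blast
          have "w = wedge p (k *s s + y)" using ke y pst by (simp add: wedge_lin)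
          then show "decomposable w" using w(2) decomposable_def by blast
        qed
        then show False using ndecE1 by blast
      qed
      have "card D \<le> card S" using DS by (intro card_mono) auto
      also have "\<dots> \<le> CARD('a)^2" using CARD_DIM[OF Ssub dS] .
      finally show ?thesis unfolding D_def .
    next
      assume Q: "\<forall>h\<in>F. \<exists>a b. a \<in> Uset p s t \<and> b \<in> Uset p s t \<and> h = wedge a b"
      define W where "W = vec.span {wedge p s, wedge p t, wedge s t}"
      define S where "S = E \<inter> W"
      have Ssub: "vec.subspace S" unfolding S_def W_def
        by (rule vec.subspace_inter[OF E vec.subspace_span])
      have FW: "h \<in> W" if "h \<in> F" for h
      proof -
        have "\<exists>a b. a \<in> Uset p s t \<and> b \<in> Uset p s t \<and> h = wedge a b" using Q that by (rule bspec)
        then obtain a b where ab: "a \<in> Uset p s t" "b \<in> Uset p s t" "h = wedge a b" by (elim exE conjE)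
        have "\<exists>x y z. wedge a b = x *s wedge p s + y *s wedge p t + z *s wedge s t"
          by (rule WEXP[OF ab(1,2)])
        then obtain x y z where xyz: "wedge a b = x *s wedge p s + y *s wedge p t + z *s wedge s t" by (elim exE)
        have b1: "wedge p s \<in> W" unfolding W_def by (rule vec.span_base) simp
        have b2: "wedge p t \<in> W" unfolding W_def by (rule vec.span_base) simp
        have b3: "wedge s t \<in> W" unfolding W_def by (rule vec.span_base) simp
        have c1: "x *s wedge p s \<in> W" using b1 unfolding W_def by (rule vec.span_scale)
        have c2: "y *s wedge p t \<in> W" using b2 unfolding W_def by (rule vec.span_scale)
        have c3: "z *s wedge s t \<in> W" using b3 unfolding W_def by (rule vec.span_scale)
        have "x *s wedge p s + y *s wedge p t \<in> W" using c1 c2 unfolding W_def by (rule vec.span_add)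
        then have "x *s wedge p s + y *s wedge p t + z *s wedge s t \<in> W" using c3 unfolding W_def by (rule vec.span_add)
        then show "h \<in> W" using ab(3) xyz by simp
      qed
      have DS: "D \<subseteq> S"
      proof
        fix e assume eD: "e \<in> D"
        then have "w0 + e \<in> F" unfolding F_def by (rule imageI)
        then have "w0 + e \<in> W" by (rule FW)
        moreover have "w0 \<in> W" using FW wF by blast
        ultimately have "(w0 + e) - w0 \<in> W" unfolding W_def by (rule vec.span_diff)
        then show "e \<in> S" using eD D_def S_def by simp
      qed
      have dS: "vec.dim S \<le> 2"
      proof -
        have spS: "vec.span S = S" using vec.span_eq_iff[THEN iffD2, OF Ssub] .
        have w0S: "w0 \<notin> S" using w0(2) S_def by simp
        have "w0 \<notin> vec.span S" unfolding spS by (rule w0S)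
        then have "vec.dim (insert w0 S) = vec.dim S + 1" by (simp only: vec.dim_insert if_False)
        moreover have "insert w0 S \<subseteq> W" using FW wF S_def by blast
        then have "vec.dim (insert w0 S) \<le> vec.dim W" by (rule vec.dim_subset)
        moreover have "vec.dim W \<le> 3"
        proof -
          have "vec.dim W = vec.dim {wedge p s, wedge p t, wedge s t}" unfolding W_def by simp
          also have "\<dots> \<le> card {wedge p s, wedge p t, wedge s t}" by (rule vec.dim_le_card') simp
          also have "\<dots> \<le> 3" by (intro card_insert_le_m1) auto
          finally show ?thesis .
        qed
        ultimately show ?thesis by simp
      qed
      have "card D \<le> card S" using DS by (intro card_mono) auto
      also have "\<dots> \<le> CARD('a)^2" using CARD_DIM[OF Ssub dS] .
      finally show ?thesis unfolding D_def .
    qed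
  qed
qed


lemma Uset_subspace: "vec.subspace (Uset p s t)"
proof (rule vec.subspaceI)
  show "0 \<in> Uset p s t" unfolding Uset_def
    by (rule CollectI, rule exI[of _ 0], rule exI[of _ 0], rule exI[of _ 0]) simp
next
  fix a b assume "a \<in> Uset p s t" "b \<in> Uset p s t"
  then show "a + b \<in> Uset p s t" using Uset_lin[of a p s t b 1 1] by simp
next
  fix c a assume "a \<in> Uset p s t"
  then show "c *s a \<in> Uset p s t" using Uset_lin[of a p s t a c 0] by simp
qed

lemma VE_sub:
  assumes "vec.subspace T" "\<And>f v. f \<in> E \<Longrightarrow> f \<noteq> 0 \<Longrightarrow> v \<in> Vw f \<Longrightarrow> v \<in> T"
  shows "VE E \<subseteq> T"
  unfolding VE_def by (rule vec.span_minimal) (use assms in auto)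

lemma LOWER:
  fixes E :: "('a::{field,finite} ^ ('n::finite \<times> 'n)) set"
  assumes E: "vec.subspace E" and decE: "decomposable_subspace E"
    and w0: "w0 \<notin> E" "w0 = wedge x y" "w0 \<noteq> 0"
    and VE: "Vw w0 \<subseteq> VE E"
  shows "CARD('a)^2 \<le> card {e \<in> E. decomposable (w0 + e)}"
proof -
  define D where "D = {e \<in> E. decomposable (w0 + e)}"
  have xV: "x \<in> VE E" using VE w0(2) by (auto simp: Vw_def wedge3_left)
  have yV: "y \<in> VE E" using VE w0(2) by (auto simp: Vw_def wedge3_right)
  have VEs: "vec.subspace (VE E)" unfolding VE_def by simp
  have Dgood: "e \<in> D" if "e \<in> E" "isw (w0 + e)" for e
  proof -
    have "w0 + e \<noteq> 0"
    proof
      assume "w0 + e = 0"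
      then have "w0 = - e" by (simp add: add_eq_0_iff2)
      then show False using w0(1) vec.subspace_neg[OF E that(1)] by simp
    qed
    then show ?thesis using that by (simp add: D_def decomposable_isw)
  qed
  have i2xy: "ind2 x y" using w0 wedge_ne0_ind2 by blast
  show ?thesis
  proof (cases "\<exists>f0\<in>E. \<exists>f1\<in>E. f0 \<noteq> 0 \<and> (\<forall>k. f1 \<noteq> k *s f0)")
    case True
    then obtain f0 f1 where f: "f0 \<in> E" "f1 \<in> E" "f0 \<noteq> 0" "\<forall>k. f1 \<noteq> k *s f0" by blast
    have f10: "f1 \<noteq> 0" using f(4)[rule_format, of 0] by simp
    have Fm: "\<forall>h\<in>E - {0}. \<forall>h'\<in>E - {0}. meet h h'"
    proof (intro ballI)
      fix h h' assume h: "h \<in> E - {0}" and h': "h' \<in> E - {0}"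
      have "h - h' \<in> E" using h h' vec.subspace_diff[OF E] by blast
      then show "meet h h'" using h h' isw_E[OF decE] by (intro MEETE) auto
    qed
    have Fh: "\<forall>h\<in>E - {0}. h \<noteq> 0 \<and> isw h" using isw_E[OF decE] by blast
    obtain p s t where pst: "p \<noteq> 0" "f0 = wedge p s" "f1 = wedge p t"
      using Fm f f10 meet_def by blast
    have ind: "ind3 p s t"
      unfolding ind3_def
    proof (intro allI impI)
      fix a b c assume h: "a *s p + b *s s + c *s t = 0"
      have c0: "c = 0"
      proof (rule ccontr)
        assume "c \<noteq> 0"
        then have "t = (- a / c) *s p + (- b / c) *s s" using solve2[OF h] by blast
        then have "f1 = (- b / c) *s f0" using pst by (simp add: wedge_lin)
        then show False using f(4) by blast
      qed
      then have "a *s p + b *s s = 0" using h by simp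
      then show "a = 0 \<and> b = 0 \<and> c = 0"
        using wedge_ne0_ind2[of p s] pst f(3) c0 unfolding ind2_def by blast
    qed
    have F0: "wedge p s \<in> E - {0}" and F1: "wedge p t \<in> E - {0}" using f f10 pst by auto
    have "(\<forall>h\<in>E - {0}. \<exists>y. h = wedge p y) \<or>
         (\<forall>h\<in>E - {0}. \<exists>a b. a \<in> Uset p s t \<and> b \<in> Uset p s t \<and> h = wedge a b)"
      by (rule FAM[OF ind Fh F0 F1 Fm])
    then show ?thesis
    proof
      assume A: "\<forall>h\<in>E - {0}. \<exists>y. h = wedge p y"
      have Ksub: "vec.subspace {v. wedge p v \<in> E}"
      proof (rule vec.subspaceI)
        show "0 \<in> {v. wedge p v \<in> E}" using vec.subspace_0[OF E] by simp
      next
        fix a b assume "a \<in> {v. wedge p v \<in> E}" "b \<in> {v. wedge p v \<in> E}"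
        then show "a + b \<in> {v. wedge p v \<in> E}" using vec.subspace_add[OF E] by (simp add: wedge_lin)
      next
        fix c a assume "a \<in> {v. wedge p v \<in> E}"
        then show "c *s a \<in> {v. wedge p v \<in> E}" using vec.subspace_scale[OF E] by (simp add: wedge_lin)
      qed
      have K: "VE E \<subseteq> {v. wedge p v \<in> E}"
      proof (rule VE_sub[OF Ksub])
        fix f v assume fv: "f \<in> E" "f \<noteq> 0" "v \<in> Vw f"
        obtain y' where y': "f = wedge p y'" using A fv by blast
        obtain al be where "v = al *s p + be *s y'" using Vw_wedge fv y' by blast
        then have "wedge p v = be *s f" using y' by (simp add: wedge_lin)
        then show "v \<in> {v. wedge p v \<in> E}" using vec.subspace_scale[OF E fv(1)] by simp
      qed
      have comb: "al *s x + be *s y \<in> VE E" for al be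
        using xV yV VEs by (intro vec.subspace_add vec.subspace_scale) auto
      have i2p: "ind2 (wedge p x) (wedge p y)"
        unfolding ind2_def
      proof (intro allI impI)
        fix al be assume h: "al *s wedge p x + be *s wedge p y = 0"
        then have "wedge p (al *s x + be *s y) = 0" by (simp add: wedge_lin)
        then obtain k where k: "al *s x + be *s y = k *s p" using wedge_zero_dep pst(1) by blast
        show "al = 0 \<and> be = 0"
        proof (cases "k = 0")
          case True
          then show ?thesis using k i2xy unfolding ind2_def by simp
        next
          case False
          define z where "z = al *s x + be *s y"
          have "z \<noteq> 0" using k False pst(1) z_def by simp
          then obtain c d where cd: "wedge x y = wedge z (c *s x + d *s y)" using wedge_factor z_def by blast
          have "wedge x y = wedge p (k *s (c *s x + d *s y))" using cd k z_def by (simp add: wedge_lin mult.commute)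
          moreover have "k *s (c *s x + d *s y) \<in> VE E" using comb VEs vec.subspace_scale by blast
          ultimately have "w0 \<in> E" using K w0(2) by auto
          then show ?thesis using w0(1) by blast
        qed
      qed
      have TD: "{al *s wedge p x + be *s wedge p y | al be. True} \<subseteq> D"
      proof
        fix e assume "e \<in> {al *s wedge p x + be *s wedge p y | al be. True}"
        then obtain al be where e: "e = al *s wedge p x + be *s wedge p y" by blast
        define z where "z = al *s x + be *s y"
        have ez: "e = wedge p z" using e z_def by (simp add: wedge_lin)
        have eE: "e \<in> E" using ez K comb z_def by auto
        have "isw (w0 + e)"
        proof (cases "z = 0")
          case True
          then show ?thesis using ez w0(2) isw_def by auto
        next
          case False
          then obtain c d where cd: "wedge x y = wedge z (c *s x + d *s y)" using wedge_factor z_def by blast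
          have "w0 + e = wedge z (c *s x + d *s y - p)"
            using cd ez w0(2) by (simp add: wedge_lin wedge_swap[of p z])
          then show ?thesis using isw_def by blast
        qed
        then show "e \<in> D" using Dgood eE by blast
      qed
      have "CARD('a)^2 = card {al *s wedge p x + be *s wedge p y | al be. True}"
        using CARD2[OF i2p] by simp
      also have "\<dots> \<le> card D" using TD by (intro card_mono) auto
      finally show ?thesis unfolding D_def .
    next
      assume Q: "\<forall>h\<in>E - {0}. \<exists>a b. a \<in> Uset p s t \<and> b \<in> Uset p s t \<and> h = wedge a b"
      have VU: "VE E \<subseteq> Uset p s t"
      proof (rule VE_sub[OF Uset_subspace])
        fix f v assume fv: "f \<in> E" "f \<noteq> 0" "v \<in> Vw f"
        have "\<exists>a b. a \<in> Uset p s t \<and> b \<in> Uset p s t \<and> f = wedge a b" using Q fv by blast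
        then obtain a b where ab: "a \<in> Uset p s t" "b \<in> Uset p s t" "f = wedge a b" by (elim exE conjE)
        obtain al be where "v = al *s a + be *s b" using Vw_wedge fv ab(3) by blast
        then show "v \<in> Uset p s t" using Uset_lin[OF ab(1,2)] by blast
      qed
      have xU: "x \<in> Uset p s t" and yU: "y \<in> Uset p s t" using VU xV yV by auto
      have ED: "E \<subseteq> D"
      proof
        fix e assume eE: "e \<in> E"
        have "\<exists>a b c. w0 = a *s wedge p s + b *s wedge p t + c *s wedge s t"
          using WEXP[OF xU yU] w0(2) by simp
        then obtain a1 b1 c1 where w0e: "w0 = a1 *s wedge p s + b1 *s wedge p t + c1 *s wedge s t"
          by (elim exE)
        have "\<exists>a b c. e = a *s wedge p s + b *s wedge p t + c *s wedge s t"
        proof (cases "e = 0")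
          case True
          then show ?thesis by (intro exI[of _ 0]) simp
        next
          case False
          have "\<exists>a b. a \<in> Uset p s t \<and> b \<in> Uset p s t \<and> e = wedge a b" using Q eE False by blast
          then obtain a b where ab: "a \<in> Uset p s t" "b \<in> Uset p s t" "e = wedge a b" by (elim exE conjE)
          show ?thesis using WEXP[OF ab(1,2)] ab(3) by simp
        qed
        then obtain a2 b2 c2 where ee: "e = a2 *s wedge p s + b2 *s wedge p t + c2 *s wedge s t"
          by (elim exE)
        have "w0 + e = (a1 + a2) *s wedge p s + (b1 + b2) *s wedge p t + (c1 + c2) *s wedge s t"
          using w0e ee by (simp add: algebra_simps)
        then have "isw (w0 + e)" using W3ISW by metis
        then show "e \<in> D" using Dgood eE by blast
      qed
      have i2f: "ind2 f0 f1"
        unfolding ind2_def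
      proof (intro allI impI)
        fix a b assume h: "a *s f0 + b *s f1 = 0"
        have b0: "b = 0"
        proof (rule ccontr)
          assume "b \<noteq> 0"
          then have "f1 = (- a / b) *s f0" using solve2[of a f0 0 f0 b f1] h by simp
          then show False using f(4) by blast
        qed
        then show "a = 0 \<and> b = 0" using h f(3) by simp
      qed
      have TE: "{a *s f0 + b *s f1 | a b. True} \<subseteq> E"
        using f E by (auto intro!: vec.subspace_add vec.subspace_scale)
      have "CARD('a)^2 = card {a *s f0 + b *s f1 | a b. True}" using CARD2[OF i2f] by simp
      also have "\<dots> \<le> card D" using TE ED by (intro card_mono) auto
      finally show ?thesis unfolding D_def .
    qed
  next
    case False
    note nf = False
    show ?thesis
    proof (cases "\<exists>f0\<in>E. f0 \<noteq> 0")
      case True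
      then obtain f0 where f0: "f0 \<in> E" "f0 \<noteq> 0" by blast
      obtain a b where ab: "f0 = wedge a b" using isw_E[OF decE f0(1)] isw_def by blast
      have VU: "VE E \<subseteq> Uset a b b"
      proof (rule VE_sub[OF Uset_subspace])
        fix f v assume fv: "f \<in> E" "f \<noteq> 0" "v \<in> Vw f"
        obtain k where k: "f = k *s f0" using nf f0 fv by blast
        have "k \<noteq> 0" using k fv(2) by auto
        then have "v \<in> Vw f0" using fv(3) k Vw_scale by blast
        then obtain al be where "v = al *s a + be *s b" using Vw_wedge f0(2) ab by blast
        then have "v = al *s a + be *s b + 0 *s b" by simp
        then show "v \<in> Uset a b b" unfolding Uset_def by blast
      qed
      obtain c1 c2 c3 where "wedge x y = c1 *s wedge a b + c2 *s wedge a b + c3 *s wedge b b"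
        using WEXP[of x a b b y] VU xV yV by blast
      then have "w0 = (c1 + c2) *s f0" using w0(2) ab by (simp add: algebra_simps)
      then have "w0 \<in> E" using vec.subspace_scale[OF E f0(1), of "c1 + c2"] by simp
      then show ?thesis using w0(1) by blast
    next
      case False
      then have "(\<Union>w\<in>E - {0}. Vw w) = {}" by auto
      then have "VE E = {0}" unfolding VE_def by simp
      then have "x = 0" using xV by simp
      then show ?thesis using w0 by simp
    qed
  qed
qed


theorem lemma6p3:
  fixes E E1 :: "('a::{field, finite} ^ ('n::finite \<times> 'n)) set"
  assumes m: "CARD('n) > 4"
    and E: "vec.subspace E" and E1: "vec.subspace E1"
    and sub: "E \<subseteq> E1" and E1alt: "E1 \<subseteq> alt2"
    and dim: "vec.dim E1 = vec.dim E + 1"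
    and decE: "decomposable_subspace E"
    and ndecE1: "\<not> decomposable_subspace E1"
  shows "card {w \<in> E1 - E. decomposable w} \<le> CARD('a)^2 * (CARD('a) - 1)
    \<and> ((\<exists>w \<in> E1 - E. decomposable w \<and> Vw w \<subseteq> VE E) \<longrightarrow>
         card {w \<in> E1 - E. decomposable w} = CARD('a)^2 * (CARD('a) - 1))"
proof
  show "card {w \<in> E1 - E. decomposable w} \<le> CARD('a)^2 * (CARD('a) - 1)"
  proof (cases "{w \<in> E1 - E. decomposable w} = {}")
    case True then show ?thesis by (simp only: card.empty)
  next
    case False
    then obtain w0 where w0: "w0 \<in> E1" "w0 \<notin> E" "decomposable w0" by blast
    have "card {w \<in> E1 - E. decomposable w} = (CARD('a) - 1) * card {e \<in> E. decomposable (w0 + e)}"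
      by (rule COUNT[OF E E1 sub dim w0(1,2)])
    also have "\<dots> \<le> (CARD('a) - 1) * CARD('a)^2"
      using UPPER[OF E E1 sub dim decE ndecE1 w0] by simp
    finally show ?thesis by (simp add: mult.commute)
  qed
next
  show "(\<exists>w \<in> E1 - E. decomposable w \<and> Vw w \<subseteq> VE E) \<longrightarrow>
         card {w \<in> E1 - E. decomposable w} = CARD('a)^2 * (CARD('a) - 1)"
  proof
    assume "\<exists>w \<in> E1 - E. decomposable w \<and> Vw w \<subseteq> VE E"
    then obtain w0 where w0: "w0 \<in> E1" "w0 \<notin> E" "decomposable w0" "Vw w0 \<subseteq> VE E" by blast
    obtain x y where xy: "w0 = wedge x y" "w0 \<noteq> 0" using w0(3) decomposable_def by blast
    have "card {e \<in> E. decomposable (w0 + e)} = CARD('a)^2"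
      using UPPER[OF E E1 sub dim decE ndecE1 w0(1-3)] LOWER[OF E decE w0(2) xy(1,2) w0(4)] by simp
    moreover have "card {w \<in> E1 - E. decomposable w} = (CARD('a) - 1) * card {e \<in> E. decomposable (w0 + e)}"
      by (rule COUNT[OF E E1 sub dim w0(1,2)])
    ultimately show "card {w \<in> E1 - E. decomposable w} = CARD('a)^2 * (CARD('a) - 1)"
      by (simp add: mult.commute)
  qed
qed

end
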